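(* Let $\chi_1 \pmod{q_1}$ and $\chi_2 \pmod{q_2}$ be primitive Dirichlet characters with $\chi_1\chi_2(-1)=1$ and $q_1q_2>1$, and put $N=q_1q_2$. Suppose $q_1\neq1$, and let $\gamma_1,\gamma_2\in\Gamma_0(N)$ have the same left column. Then $S_{\chi_1,\chi_2}(\gamma_1)=S_{\chi_1,\chi_2}(\gamma_2)$.
   Context: A primitive character modulo $1$ means the trivial character. Let $\psi=\chi_1\overline{\chi_2}$, viewed as a character of $\Gamma_0(N)$ via $\psi\left(\begin{smallmatrix} a&b\\ c&d\end{smallmatrix}\right)=\psi(d)$. Write $e(x)=e^{2\pi i x}$, $\tau(\chi)$ for the Gauss sum, $L(s,\chi)$ for the Dirichlet $L$-function. For $z$ in the upper half-plane define $$F_{\chi_1,\chi_2}(z)=c_1z+c_0+\sum_{n\ge1}\frac{\lambda(n)}{\sqrt n}e(nz),\qquad \lambda(n)=\sum_{ab=n}\chi_1(a)\overline{\chi_2}(b)(b/a)^{1/2},$$ where $c_1=\pi i L(-1,\overline{\chi_2})$ if $q_1=1$ and $c_1=0$ otherwise, and $c_0=\tfrac12L(1,\chi_1)$ if $q_2=1$ and $c_0=0$ otherwise. For $\gamma\in\Gamma_0(N)$ the function $F_{\chi_1,\chi_2}(\gamma z)-\psi(\gamma)F_{\chi_1,\chi_2}(z)$ is independent of $z$; call this constant $\phi_{\chi_1,\chi_2}(\gamma)$, and define $S_{\chi_1,\chi_2}(\gamma)=\frac{\tau(\overline{\chi_1})}{\pi i}\phi_{\chi_1,\chi_2}(\gamma)$.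 *)

theory Defs
  imports "HOL-Analysis.Analysis"
begin

definition dirichlet_char :: "nat \<Rightarrow> (int \<Rightarrow> complex) \<Rightarrow> bool" where
  "dirichlet_char q chi \<longleftrightarrow> q > 0 \<and>
     (\<forall>n. chi (n + int q) = chi n) \<and>
     (\<forall>m n. chi (m * n) = chi m * chi n) \<and>
     chi 1 = 1 \<and>
     (\<forall>n. chi n = 0 \<longleftrightarrow> \<not> coprime n (int q))"

definition primitive_char :: "nat \<Rightarrow> (int \<Rightarrow> complex) \<Rightarrow> bool" where
  "primitive_char q chi \<longleftrightarrow> dirichlet_char q chi \<and>
     \<not> (\<exists>d. 0 < d \<and> d < q \<and> d dvd q \<and>
            (\<forall>a. coprime a (int q) \<and> a mod int d = 1 mod int d \<longrightarrow> chi a = 1))"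

definition e :: "complex \<Rightarrow> complex" where
  "e x = exp (2 * of_real pi * \<i> * x)"

definition gauss_sum :: "nat \<Rightarrow> (int \<Rightarrow> complex) \<Rightarrow> complex" where
  "gauss_sum q chi = (\<Sum>a = 1..int q. chi a * e (of_int a / of_nat q))"

(* L(1,chi) for nonprincipal chi: sum of the convergent series sum chi(n)/n *)
definition L_at_1 :: "(int \<Rightarrow> complex) \<Rightarrow> complex" where
  "L_at_1 chi = lim (\<lambda>M. \<Sum>n = 1..M. chi (int n) / of_nat n)"

(* L(-1,chi) = - B_{2,chi} / 2, B_{2,chi} = q * sum_{a=1}^q chi(a) B_2(a/q),
   B_2(x) = x^2 - x + 1/6 (value of the analytic continuation) *)
definition L_at_minus1 :: "nat \<Rightarrow> (int \<Rightarrow> complex) \<Rightarrow> complex" where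
  "L_at_minus1 q chi = - (of_nat q * (\<Sum>a = 1..int q. chi a *
       of_real ((real_of_int a / real q)\<^sup>2 - real_of_int a / real q + 1/6))) / 2"

definition lam :: "(int \<Rightarrow> complex) \<Rightarrow> (int \<Rightarrow> complex) \<Rightarrow> nat \<Rightarrow> complex" where
  "lam chi1 chi2 n = (\<Sum>a\<in>{a. a dvd n}.
      chi1 (int a) * cnj (chi2 (int (n div a))) *
      of_real (sqrt (real (n div a) / real a)))"

definition F :: "nat \<Rightarrow> (int \<Rightarrow> complex) \<Rightarrow> nat \<Rightarrow> (int \<Rightarrow> complex) \<Rightarrow> complex \<Rightarrow> complex" where
  "F q1 chi1 q2 chi2 z =
     (if q1 = 1 then of_real pi * \<i> * L_at_minus1 q2 (\<lambda>n. cnj (chi2 n)) else 0) * z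
   + (if q2 = 1 then L_at_1 chi1 / 2 else 0)
   + (\<Sum>n. lam chi1 chi2 (Suc n) / of_real (sqrt (real (Suc n))) * e (of_nat (Suc n) * z))"

(* matrices (a,b,c,d) = [[a,b],[c,d]] *)
definition Gamma0 :: "nat \<Rightarrow> (int \<times> int \<times> int \<times> int) set" where
  "Gamma0 N = {(a,b,c,d). a * d - b * c = 1 \<and> int N dvd c}"

fun moebius :: "int \<times> int \<times> int \<times> int \<Rightarrow> complex \<Rightarrow> complex" where
  "moebius (a,b,c,d) z = (of_int a * z + of_int b) / (of_int c * z + of_int d)"

fun psi :: "(int \<Rightarrow> complex) \<Rightarrow> (int \<Rightarrow> complex) \<Rightarrow> int \<times> int \<times> int \<times> int \<Rightarrow> complex" where
  "psi chi1 chi2 (a,b,c,d) = chi1 d * cnj (chi2 d)"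

fun left_column :: "int \<times> int \<times> int \<times> int \<Rightarrow> int \<times> int" where
  "left_column (a,b,c,d) = (a,c)"

definition phi :: "nat \<Rightarrow> (int \<Rightarrow> complex) \<Rightarrow> nat \<Rightarrow> (int \<Rightarrow> complex) \<Rightarrow>
                   int \<times> int \<times> int \<times> int \<Rightarrow> complex" where
  "phi q1 chi1 q2 chi2 \<gamma> = (THE c. \<forall>z. Im z > 0 \<longrightarrow>
      F q1 chi1 q2 chi2 (moebius \<gamma> z) - psi chi1 chi2 \<gamma> * F q1 chi1 q2 chi2 z = c)"

definition S :: "nat \<Rightarrow> (int \<Rightarrow> complex) \<Rightarrow> nat \<Rightarrow> (int \<Rightarrow> complex) \<Rightarrow>
                 int \<times> int \<times> int \<times> int \<Rightarrow> complex" where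
  "S q1 chi1 q2 chi2 \<gamma> = gauss_sum q1 (\<lambda>n. cnj (chi1 n)) / (of_real pi * \<i>) * phi q1 chi1 q2 chi2 \<gamma>"

end

theory Submission
  imports Defs
begin

lemma e_shift:
  fixes n :: nat and k :: int
  shows "e (of_nat n * (z + of_int k)) = e (of_nat n * z)"
proof -
  have "e (of_nat n * (z + of_int k)) = e (of_nat n * z) * exp ((2 * complex_of_int (int n * k) * pi) * \<i>)"
    unfolding e_def by (simp add: exp_add[symmetric] algebra_simps)
  also have "exp ((2 * complex_of_int (int n * k) * pi) * \<i>) = 1"
    using exp_integer_2pi[of "real_of_int (int n * k)"] by (simp add: mult_ac)
  finally show ?thesis by simp
qed

lemma F_shift:
  assumes "q1 \<noteq> 1"
  shows "F q1 chi1 q2 chi2 (z + of_int k) = F q1 chi1 q2 chi2 z"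
proof -
  have "\<And>n. e (of_nat (Suc n) * (z + of_int k)) = e (of_nat (Suc n) * z)" by (rule e_shift)
  then show ?thesis unfolding F_def using assms by (simp only:) simp
qed

lemma char_periodic:
  assumes "dirichlet_char q chi"
  shows "chi (n + int q * m) = chi n"
proof -
  have p: "\<And>x. chi (x + int q) = chi x" using assms unfolding dirichlet_char_def by blast
  have "\<forall>n. chi (n + int q * m) = chi n"
  proof (induction m rule: int_induct[where k=0])
    case base then show ?case by simp
  next
    case (step1 i)
    then show ?case using p by (metis add.assoc distrib_left mult.right_neutral)
  next
    case (step2 i)
    show ?case
    proof
      fix n
      have "chi (n + int q * (i - 1)) = chi (n + int q * (i - 1) + int q)" using p by metis
      also have "\<dots> = chi (n + int q * i)" by (simp add: algebra_simps)
      also have "\<dots> = chi n" using step2 by blast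
      finally show "chi (n + int q * (i - 1)) = chi n" .
    qed
  qed
  then show ?thesis by blast
qed

theorem proposition2p4:
  fixes q1 q2 :: nat and chi1 chi2 :: "int \<Rightarrow> complex"
    and \<gamma>1 \<gamma>2 :: "int \<times> int \<times> int \<times> int"
  assumes "primitive_char q1 chi1" and "primitive_char q2 chi2"
    and "chi1 (-1) * chi2 (-1) = 1"
    and "q1 * q2 > 1"
    and "q1 \<noteq> 1"
    and "\<gamma>1 \<in> Gamma0 (q1 * q2)" and "\<gamma>2 \<in> Gamma0 (q1 * q2)"
    and "left_column \<gamma>1 = left_column \<gamma>2"
  shows "S q1 chi1 q2 chi2 \<gamma>1 = S q1 chi1 q2 chi2 \<gamma>2"
proof -
  obtain a b c d where g1: "\<gamma>1 = (a,b,c,d)" by (cases \<gamma>1) auto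
  obtain a' b' c' d' where g2: "\<gamma>2 = (a',b',c',d')" by (cases \<gamma>2) auto
  have aa: "a' = a" "c' = c" using assms(8) g1 g2 by auto
  have det1: "a * d - b * c = 1" and dv: "int (q1 * q2) dvd c"
    using assms(6) g1 unfolding Gamma0_def by auto
  have det2: "a * d' - b' * c = 1" using assms(7) g2 aa unfolding Gamma0_def by auto
  define k where "k = d * b' - b * d'"
  have hb: "b' = a * k + b"
  proof -
    have "a * k + b = (a * d) * b' - (a * d') * b + b" by (simp add: k_def algebra_simps)
    also have "\<dots> = (1 + b * c) * b' - (1 + b' * c) * b + b" using det1 det2
      by (metis add_diff_cancel_left' diff_add_cancel)
    also have "\<dots> = b'" by (simp add: algebra_simps)
    finally show ?thesis by simp
  qed
  have hd: "d' = c * k + d"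
  proof -
    have "c * k + d = (b' * c) * d - (b * c) * d' + d" by (simp add: k_def algebra_simps)
    also have "\<dots> = (a * d' - 1) * d - (a * d - 1) * d' + d" using det1 det2
      by (metis add_diff_cancel_left' diff_add_cancel)
    also have "\<dots> = d'" by (simp add: algebra_simps)
    finally show ?thesis by simp
  qed
  have dc1: "dirichlet_char q1 chi1" and dc2: "dirichlet_char q2 chi2"
    using assms(1,2) unfolding primitive_char_def by auto
  obtain m1 where m1: "c = int q1 * m1" using dv by (metis dvd_mult_left dvd_def of_nat_mult)
  obtain m2 where m2: "c = int q2 * m2" using dv by (metis dvd_mult_right dvd_def of_nat_mult)
  have "chi1 d' = chi1 d" unfolding hd m1
    using char_periodic[OF dc1, of d "m1 * k"] by (simp add: algebra_simps)
  moreover have "chi2 d' = chi2 d" unfolding hd m2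
    using char_periodic[OF dc2, of d "m2 * k"] by (simp add: algebra_simps)
  ultimately have psi_eq: "psi chi1 chi2 \<gamma>2 = psi chi1 chi2 \<gamma>1" using g1 g2 by simp
  have moeb: "moebius \<gamma>2 z = moebius \<gamma>1 (z + of_int k)" for z
    unfolding g1 g2 aa hb hd by (simp add: algebra_simps)
  let ?G = "\<lambda>\<gamma> z. F q1 chi1 q2 chi2 (moebius \<gamma> z) - psi chi1 chi2 \<gamma> * F q1 chi1 q2 chi2 z"
  have Gsh: "?G \<gamma>2 z = ?G \<gamma>1 (z + of_int k)" for z
    using moeb psi_eq F_shift[OF assms(5)] by simp
  have P: "(\<forall>z. Im z > 0 \<longrightarrow> ?G \<gamma>2 z = cc) = (\<forall>z. Im z > 0 \<longrightarrow> ?G \<gamma>1 z = cc)" for cc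
  proof
    assume H: "\<forall>z. Im z > 0 \<longrightarrow> ?G \<gamma>2 z = cc"
    show "\<forall>z. Im z > 0 \<longrightarrow> ?G \<gamma>1 z = cc"
    proof (intro allI impI)
      fix z :: complex assume "Im z > 0"
      then have "?G \<gamma>2 (z - of_int k) = cc" using H by simp
      then show "?G \<gamma>1 z = cc" using Gsh[of "z - of_int k"] by simp
    qed
  next
    assume H: "\<forall>z. Im z > 0 \<longrightarrow> ?G \<gamma>1 z = cc"
    show "\<forall>z. Im z > 0 \<longrightarrow> ?G \<gamma>2 z = cc"
      using H Gsh by simp
  qed
  have "phi q1 chi1 q2 chi2 \<gamma>1 = phi q1 chi1 q2 chi2 \<gamma>2"
    unfolding phi_def using P by simp
  then show ?thesis unfolding S_def by simp
qed

end
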